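(* If $w\in S_n$ is fireworks, then $\mathrm{rajcode}(w)=\mathrm{wt}(\overline{D(w)})$.
   Context: Permutations are written in one-line notation. The decreasing runs of $w$ are the maximal consecutive decreasing segments of the one-line notation; $w$ is fireworks if the initial elements of its decreasing runs occur in increasing order. The Rajchgot code $\mathrm{rajcode}(w)=(r_1,\ldots,r_n)$: for each $j$ choose an increasing subsequence of $w(j),\ldots,w(n)$ containing $w(j)$ of greatest length among such subsequences, and let $r_j$ be the number of terms omitted. The Rothe diagram is $D(w)=\{(i,j)\in[n]^2: i<w^{-1}(j),\ j<w(i)\}$ ($i$ is the row, $j$ the column). For a diagram $D\subseteq[n]^2$, its upper closure is $\overline{D}=\{(i,j): i\le i' \text{ for some } (i',j)\in D\}$, and $\mathrm{wt}(D)\in\mathbb{Z}^n$ has $i$-th entry the number of boxes of $D$ in row $i$. *)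

theory Defs
  imports "HOL-Combinatorics.Permutations"
begin

text \<open>Permutations w of [n] = {1..n} are functions nat => nat with w permutes {1..n};
  one-line notation w(1) ... w(n).\<close>

text \<open>Positions starting a decreasing run: position 1, and every position i>1 with
  w(i-1) < w(i) (a run breaks exactly at an ascent).\<close>
definition run_starts :: "nat \<Rightarrow> (nat \<Rightarrow> nat) \<Rightarrow> nat set" where
  "run_starts n w = {i \<in> {1..n}. i = 1 \<or> w (i - 1) < w i}"

definition fireworks :: "nat \<Rightarrow> (nat \<Rightarrow> nat) \<Rightarrow> bool" where
  "fireworks n w \<longleftrightarrow>
     (\<forall>i \<in> run_starts n w. \<forall>j \<in> run_starts n w. i < j \<longrightarrow> w i < w j)"

definition inc_subseqs_from :: "nat \<Rightarrow> (nat \<Rightarrow> nat) \<Rightarrow> nat \<Rightarrow> nat set set" where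
  "inc_subseqs_from n w j = {S. S \<subseteq> {j..n} \<and> j \<in> S \<and> strict_mono_on S w}"

definition rajcode :: "nat \<Rightarrow> (nat \<Rightarrow> nat) \<Rightarrow> nat \<Rightarrow> nat" where
  "rajcode n w j = (n + 1 - j) - Max (card ` inc_subseqs_from n w j)"

definition rothe :: "nat \<Rightarrow> (nat \<Rightarrow> nat) \<Rightarrow> (nat \<times> nat) set" where
  "rothe n w = {(i, j). i \<in> {1..n} \<and> j \<in> {1..n} \<and> i < inv w j \<and> j < w i}"

definition upper_closure :: "nat \<Rightarrow> (nat \<times> nat) set \<Rightarrow> (nat \<times> nat) set" where
  "upper_closure n D = {(i, j). i \<in> {1..n} \<and> j \<in> {1..n} \<and> (\<exists>i'. i \<le> i' \<and> (i', j) \<in> D)}"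

definition wt :: "(nat \<times> nat) set \<Rightarrow> nat \<Rightarrow> nat" where
  "wt D i = card {j. (i, j) \<in> D}"

end

theory Submission
  imports Defs
begin

lemma decr_run:
  fixes w :: "nat \<Rightarrow> nat"
  assumes "s \<ge> 1" "s \<le> a" "a \<le> n"
    and "\<forall>q. s < q \<and> q \<le> a \<longrightarrow> q \<notin> run_starts n w"
  shows "w a \<le> w s"
  using assms
proof (induction a)
  case 0
  then show ?case by simp
next
  case (Suc a)
  show ?case
  proof (cases "s = Suc a")
    case True
    then show ?thesis by simp
  next
    case False
    then have sa: "s \<le> a" using Suc.prems by simp
    have IH: "w a \<le> w s" using Suc.IH sa Suc.prems by simp
    have "Suc a \<notin> run_starts n w" using Suc.prems sa by simp
    then have "\<not> w a < w (Suc a)" using Suc.prems sa unfolding run_starts_def by auto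
    then show ?thesis using IH by simp
  qed
qed

lemma lrmax:
  fixes w :: "nat \<Rightarrow> nat"
  assumes fw: "fireworks n w" and "1 \<le> a" "a < p" "p \<le> n" "p \<in> run_starts n w"
  shows "w a < w p"
proof -
  define T where "T = {s \<in> run_starts n w. s \<le> a}"
  have "1 \<in> T" using assms unfolding T_def run_starts_def by auto
  have fT: "finite T" unfolding T_def by simp
  define s where "s = Max T"
  have sT: "s \<in> T" using fT \<open>1 \<in> T\<close> s_def Max_in by blast
  have s1: "s \<ge> 1" using Max_ge[OF fT \<open>1 \<in> T\<close>] s_def by simp
  have sa: "s \<le> a" using sT T_def by simp
  have nr: "\<forall>q. s < q \<and> q \<le> a \<longrightarrow> q \<notin> run_starts n w"
  proof (intro allI impI)
    fix q assume q: "s < q \<and> q \<le> a"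
    show "q \<notin> run_starts n w"
    proof
      assume "q \<in> run_starts n w"
      then have "q \<in> T" using q T_def by simp
      then have "q \<le> s" using Max_ge[OF fT] s_def by simp
      then show False using q by simp
    qed
  qed
  have "w a \<le> w s" using decr_run[OF s1 sa _ nr] assms by simp
  moreover have "w s < w p" using fw sT assms sa unfolding fireworks_def T_def by auto
  ultimately show ?thesis by simp
qed

theorem lemma3p13:
  fixes n :: nat and w :: "nat \<Rightarrow> nat"
  assumes "w permutes {1..n}"
    and "fireworks n w"
  shows "\<forall>i \<in> {1..n}. rajcode n w i = wt (upper_closure n (rothe n w)) i"
proof
  fix i assume i: "i \<in> {1..n}"
  note perm = assms(1)
  note fw = assms(2)
  define R where "R = {i} \<union> {p \<in> run_starts n w. i < p}"
  have Rsub: "R \<subseteq> {i..n}" using i unfolding R_def run_starts_def by auto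
  have fR: "finite R" using Rsub finite_subset by blast
  have iR: "i \<in> R" unfolding R_def by simp
  have Rrs: "\<And>p. p \<in> R \<Longrightarrow> p \<noteq> i \<Longrightarrow> p \<in> run_starts n w" unfolding R_def by auto
  have injw: "inj w" using perm permutes_inj by blast
  have cols: "{j. (i, j) \<in> upper_closure n (rothe n w)} = w ` ({i..n} - R)"
  proof (rule set_eqI)
    fix j
    show "j \<in> {j. (i, j) \<in> upper_closure n (rothe n w)} \<longleftrightarrow> j \<in> w ` ({i..n} - R)"
    proof
      assume "j \<in> {j. (i, j) \<in> upper_closure n (rothe n w)}"
      then obtain i' where j: "j \<in> {1..n}" and ii': "i \<le> i'" and
        r: "i' \<in> {1..n}" "i' < inv w j" "j < w i'"
        unfolding upper_closure_def rothe_def by auto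
      define p where "p = inv w j"
      have wp: "w p = j" using permutes_inverses(1)[OF perm] p_def by simp
      have pn: "p \<in> {1..n}" using j p_def permutes_in_image[OF permutes_inv[OF perm]] by simp
      have "p \<notin> R"
      proof
        assume "p \<in> R"
        moreover have "p \<noteq> i" using ii' r p_def by simp
        ultimately have "p \<in> run_starts n w" using Rrs by simp
        then have "w i' < w p" using lrmax[OF fw] r p_def pn by auto
        then show False using wp r by simp
      qed
      then show "j \<in> w ` ({i..n} - R)" using wp pn ii' r p_def by force
    next
      assume "j \<in> w ` ({i..n} - R)"
      then obtain p where p: "p \<in> {i..n}" "p \<notin> R" and j: "j = w p" by blast
      have pi: "p > i" using p iR by (cases "p = i") auto
      have "p \<notin> run_starts n w" using p pi R_def by auto
      then have "\<not> w (p - 1) < w p" using p pi i unfolding run_starts_def by auto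
      moreover have "w (p - 1) \<noteq> w p" using injw pi inj_eq by fastforce
      ultimately have lt: "w p < w (p - 1)" by simp
      have pn: "p \<in> {1..n}" using p i by auto
      have jn: "j \<in> {1..n}" using j pn permutes_in_image[OF perm] by simp
      have "inv w j = p" using j permutes_inverses(2)[OF perm] by simp
      then have "(p - 1, j) \<in> rothe n w" using lt j jn pi pn i unfolding rothe_def by auto
      then show "j \<in> {j. (i, j) \<in> upper_closure n (rothe n w)}"
      proof -
        have "i \<le> p - 1" using pi by simp
        then show ?thesis using jn i \<open>(p - 1, j) \<in> rothe n w\<close> unfolding upper_closure_def by blast
      qed
    qed
  qed
  have wtv: "wt (upper_closure n (rothe n w)) i = (n + 1 - i) - card R"
  proof -
    have "wt (upper_closure n (rothe n w)) i = card (w ` ({i..n} - R))"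
      unfolding wt_def cols by simp
    also have "\<dots> = card ({i..n} - R)"
      using card_image injw inj_on_subset by blast
    also have "\<dots> = card {i..n} - card R" using Rsub fR card_Diff_subset by blast
    also have "\<dots> = (n + 1 - i) - card R" by simp
    finally show ?thesis .
  qed
  have Rinc: "R \<in> inc_subseqs_from n w i"
    unfolding inc_subseqs_from_def
  proof (intro CollectI conjI Rsub iR)
    show "strict_mono_on R w"
    proof (rule strict_mono_onI)
      fix a b assume ab: "a \<in> R" "b \<in> R" "a < b"
      then have "b \<noteq> i" using Rsub by auto
      then have "b \<in> run_starts n w" using Rrs ab by simp
      moreover have "1 \<le> a" "b \<le> n" using ab Rsub i by auto
      ultimately show "w a < w b" using lrmax[OF fw] ab by blast
    qed
  qed
  have bound: "card S \<le> card R" if S: "S \<in> inc_subseqs_from n w i" for S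
  proof -
    have Ssub: "S \<subseteq> {i..n}" and sm: "strict_mono_on S w"
      using S unfolding inc_subseqs_from_def by auto
    define f where "f a = Max {r \<in> R. r \<le> a}" for a
    have fprop: "f a \<in> R \<and> f a \<le> a \<and> (\<forall>r\<in>R. r \<le> a \<longrightarrow> r \<le> f a)" if "a \<in> S" for a
    proof -
      have fin: "finite {r \<in> R. r \<le> a}" using fR by simp
      have ne: "i \<in> {r \<in> R. r \<le> a}" using iR that Ssub by auto
      show ?thesis unfolding f_def using Max_in[OF fin] Max_ge[OF fin] ne by blast
    qed
    have "inj_on f S"
    proof (rule inj_onI)
      fix a b assume ab: "a \<in> S" "b \<in> S" "f a = f b"
      show "a = b"
      proof (rule ccontr)
        assume "a \<noteq> b"
        then consider "a < b" | "b < a" by linarith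
        then show False
        proof cases
          case 1
          note lt = 1
          let ?r = "f a"
          have r: "?r \<in> R" "?r \<le> a" using fprop[OF ab(1)] by blast+
          have nr: "\<forall>q. ?r < q \<and> q \<le> b \<longrightarrow> q \<notin> run_starts n w"
          proof (intro allI impI notI)
            fix q assume q: "?r < q \<and> q \<le> b" "q \<in> run_starts n w"
            have "q \<in> R" using q r Rsub unfolding R_def by auto
            then have "q \<le> f b" using fprop ab q by auto
            then show False using q ab by simp
          qed
          have "w b \<le> w a"
          proof -
            have nr2: "\<forall>q. a < q \<and> q \<le> b \<longrightarrow> q \<notin> run_starts n w" using nr r by auto
            have "a \<ge> 1" using ab Ssub i by auto
            then show ?thesis using decr_run[OF _ _ _ nr2] lt ab Ssub by auto
          qed
          moreover have "w a < w b" using sm ab lt strict_mono_onD by blast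
          ultimately show False by simp
        next
          case 2
          note lt = 2
          let ?r = "f b"
          have r: "?r \<in> R" "?r \<le> b" using fprop[OF ab(2)] by blast+
          have nr2: "\<forall>q. b < q \<and> q \<le> a \<longrightarrow> q \<notin> run_starts n w"
          proof (intro allI impI notI)
            fix q assume q: "b < q \<and> q \<le> a" "q \<in> run_starts n w"
            have "q \<in> R" using q r Rsub unfolding R_def by auto
            then have "q \<le> f a" using fprop[OF ab(1)] q by blast
            then show False using q ab r by simp
          qed
          have "b \<ge> 1" using ab Ssub i by auto
          then have "w a \<le> w b" using decr_run[OF _ _ _ nr2] lt ab Ssub by auto
          moreover have "w b < w a" using sm ab lt strict_mono_onD by blast
          ultimately show False by simp
        qed
      qed
    qed
    moreover have "f ` S \<subseteq> R" using fprop by auto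
    ultimately show ?thesis using card_inj_on_le fR by blast
  qed
  have finI: "finite (inc_subseqs_from n w i)"
  proof -
    have "inc_subseqs_from n w i \<subseteq> Pow {i..n}" unfolding inc_subseqs_from_def by auto
    then show ?thesis using finite_subset by blast
  qed
  have "Max (card ` inc_subseqs_from n w i) = card R"
    using Rinc bound finI by (intro Max_eqI) auto
  then show "rajcode n w i = wt (upper_closure n (rothe n w)) i"
    unfolding rajcode_def wtv by simp
qed

end
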